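(* Let $\pi$ be a rectangular permutation. Then each of $\psi_1(\pi)$, $\psi_2(\pi)$, $\psi_u(\pi)$, $\psi_d(\pi)$ that is defined (i.e. for which $\pi$ lies in the operator's domain) is again rectangular.
   Context: A permutation is rectangular if it avoids the patterns $2413,2431,4213,4231$. For $\pi\in S_n$ (one-line form $[\pi_1\cdots\pi_n]$) and $1\le i,j\le n+1$, $\rho_{i,j}(\pi)\in S_{n+1}$ is obtained by increasing by $1$ every entry $\ge i$ and inserting the value $i$ at position $j$. Operators: $\psi_1=\rho_{1,1}$, defined on all rectangular permutations (including the empty permutation $e_0$); $\psi_2=\rho_{1,2}$, defined on rectangular $\pi$ of size $\ge1$ with $\pi_1\neq1$; $\psi_u(\pi)=\rho_{\pi_1,1}(\pi)$, defined on rectangular $\pi$ of size $\ge1$ with $\pi_1\ne1$; $\psi_d(\pi)=\rho_{\pi_1+1,1}(\pi)$, defined on rectangular $\pi$ of size $\ge1$. *)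

theory Defs
  imports Main
begin

definition is_perm :: "nat list \<Rightarrow> bool" where
  "is_perm xs \<longleftrightarrow> distinct xs \<and> set xs = {1..length xs}"

definition contains :: "nat list \<Rightarrow> nat list \<Rightarrow> bool" where
  "contains xs p \<longleftrightarrow> (\<exists>idx :: nat \<Rightarrow> nat.
      strict_mono_on {..<length p} idx \<and>
      (\<forall>a<length p. idx a < length xs) \<and>
      (\<forall>a<length p. \<forall>b<length p.
          (xs ! idx a < xs ! idx b) \<longleftrightarrow> (p ! a < p ! b)))"

definition avoids :: "nat list \<Rightarrow> nat list \<Rightarrow> bool" where
  "avoids xs p \<longleftrightarrow> \<not> contains xs p"

definition rectangular :: "nat list \<Rightarrow> bool" where
  "rectangular xs \<longleftrightarrow> is_perm xs \<and>
     avoids xs [2,4,1,3] \<and> avoids xs [2,4,3,1] \<and>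
     avoids xs [4,2,1,3] \<and> avoids xs [4,2,3,1]"

definition rho :: "nat \<Rightarrow> nat \<Rightarrow> nat list \<Rightarrow> nat list" where
  "rho i j xs = (let ys = map (\<lambda>x. if i \<le> x then x + 1 else x) xs
                 in take (j - 1) ys @ [i] @ drop (j - 1) ys)"

definition psi1 :: "nat list \<Rightarrow> nat list" where "psi1 xs = rho 1 1 xs"
definition psi2 :: "nat list \<Rightarrow> nat list" where "psi2 xs = rho 1 2 xs"
definition psiu :: "nat list \<Rightarrow> nat list" where "psiu xs = rho (hd xs) 1 xs"
definition psid :: "nat list \<Rightarrow> nat list" where "psid xs = rho (hd xs + 1) 1 xs"

end

theory Submission
  imports Defs
begin
lemma contains4_back:
  assumes h: "a<b" "b<c" "c<d" "d < length xs" "(xs!a < xs!b \<longleftrightarrow> p0 < p1)" "(xs!a < xs!c \<longleftrightarrow> p0 < p2)" "(xs!a < xs!d \<longleftrightarrow> p0 < p3)" "(xs!b < xs!a \<longleftrightarrow> p1 < p0)" "(xs!b < xs!c \<longleftrightarrow> p1 < p2)" "(xs!b < xs!d \<longleftrightarrow> p1 < p3)" "(xs!c < xs!a \<longleftrightarrow> p2 < p0)" "(xs!c < xs!b \<longleftrightarrow> p2 < p1)" "(xs!c < xs!d \<longleftrightarrow> p2 < p3)" "(xs!d < xs!a \<longleftrightarrow> p3 < p0)" "(xs!d < xs!b \<longleftrightarrow> p3 < p1)" "(xs!d < xs!c \<longleftrightarrow> p3 < p2)"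
  shows "contains xs [p0,p1,p2,p3]"
proof -
  have n: "[a,b,c,d]!0 = a" "[a,b,c,d]!1 = b" "[a,b,c,d]!2 = c" "[a,b,c,d]!3 = d" by simp_all
  have np: "[p0,p1,p2,p3]!0 = p0" "[p0,p1,p2,p3]!1 = p1" "[p0,p1,p2,p3]!2 = p2" "[p0,p1,p2,p3]!3 = p3" by simp_all
  show "contains xs [p0,p1,p2,p3]" unfolding contains_def
  proof (intro exI[of _ "\<lambda>k. [a,b,c,d]!k"] conjI)
    show "strict_mono_on {..<length [p0,p1,p2,p3]} (\<lambda>k. [a,b,c,d]!k)"
    proof (rule strict_mono_onI)
      fix r s assume "r \<in> {..<length [p0,p1,p2,p3]}" "s \<in> {..<length [p0,p1,p2,p3]}" "r < s"
      then have "r<4" "s<4" "r<s" by simp_all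
      then have "(r=0\<and>s=1)\<or>(r=0\<and>s=2)\<or>(r=0\<and>s=3)\<or>(r=1\<and>s=2)\<or>(r=1\<and>s=3)\<or>(r=2\<and>s=3)" by arith
      then show "[a,b,c,d]!r < [a,b,c,d]!s"
        by (elim disjE conjE; hypsubst; simp only: n; use h(1-3) in linarith)
    qed
    show "\<forall>k<length [p0,p1,p2,p3]. [a,b,c,d]!k < length xs"
    proof (intro allI impI)
      fix k assume "k < length [p0,p1,p2,p3]"
      then have "k=0\<or>k=1\<or>k=2\<or>k=3" by simp arith
      then show "[a,b,c,d]!k < length xs"
        by (elim disjE; hypsubst; simp only: n; use h(1-4) in linarith)
    qed
    show "\<forall>i<length [p0,p1,p2,p3]. \<forall>j<length [p0,p1,p2,p3]. (xs ! ([a,b,c,d]!i) < xs ! ([a,b,c,d]!j)) = ([p0,p1,p2,p3]!i < [p0,p1,p2,p3]!j)"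
    proof (intro allI impI)
      fix i j assume "i < length [p0,p1,p2,p3]" "j < length [p0,p1,p2,p3]"
      then have "i=0\<or>i=1\<or>i=2\<or>i=3" "j=0\<or>j=1\<or>j=2\<or>j=3" by (simp, arith)+
      then show "(xs ! ([a,b,c,d]!i) < xs ! ([a,b,c,d]!j)) = ([p0,p1,p2,p3]!i < [p0,p1,p2,p3]!j)"
        by (elim disjE; hypsubst; simp only: n np less_irrefl simp_thms h)
    qed
  qed
qed
lemma contains4_fwd:
  assumes "contains xs [p0,p1,p2,p3]"
  shows "\<exists>a b c d. a<b \<and> b<c \<and> c<d \<and> d < length xs \<and> (xs!a < xs!b \<longleftrightarrow> p0 < p1) \<and> (xs!a < xs!c \<longleftrightarrow> p0 < p2) \<and> (xs!a < xs!d \<longleftrightarrow> p0 < p3) \<and> (xs!b < xs!a \<longleftrightarrow> p1 < p0) \<and> (xs!b < xs!c \<longleftrightarrow> p1 < p2) \<and> (xs!b < xs!d \<longleftrightarrow> p1 < p3) \<and> (xs!c < xs!a \<longleftrightarrow> p2 < p0) \<and> (xs!c < xs!b \<longleftrightarrow> p2 < p1) \<and> (xs!c < xs!d \<longleftrightarrow> p2 < p3) \<and> (xs!d < xs!a \<longleftrightarrow> p3 < p0) \<and> (xs!d < xs!b \<longleftrightarrow> p3 < p1) \<and> (xs!d < xs!c \<longleftrightarrow> p3 < p2)"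
proof -
  have len4: "length [p0,p1,p2,p3] = 4" by simp
  from assms obtain idx where m: "strict_mono_on {..<4} idx" and
    l: "\<forall>a<4. idx a < length xs" and
    o: "\<forall>a<4. \<forall>b<4. (xs ! idx a < xs ! idx b) \<longleftrightarrow> ([p0,p1,p2,p3] ! a < [p0,p1,p2,p3] ! b)"
    unfolding contains_def len4 by blast
  have o': "\<And>a b. a<4 \<Longrightarrow> b<4 \<Longrightarrow> (xs!idx a < xs!idx b) = ([p0,p1,p2,p3]!a < [p0,p1,p2,p3]!b)" using o by blast
  have "idx 0 < idx 1" "idx 1 < idx 2" "idx 2 < idx 3"
    using m by (auto simp: strict_mono_on_def)
  moreover have "idx 3 < length xs" using l by simp
  moreover have "(xs!idx 0 < xs!idx 1) = (p0 < p1)" using o'[of 0 1] by simp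
  moreover have "(xs!idx 0 < xs!idx 2) = (p0 < p2)" using o'[of 0 2] by simp
  moreover have "(xs!idx 0 < xs!idx 3) = (p0 < p3)" using o'[of 0 3] by simp
  moreover have "(xs!idx 1 < xs!idx 0) = (p1 < p0)" using o'[of 1 0] by simp
  moreover have "(xs!idx 1 < xs!idx 2) = (p1 < p2)" using o'[of 1 2] by simp
  moreover have "(xs!idx 1 < xs!idx 3) = (p1 < p3)" using o'[of 1 3] by simp
  moreover have "(xs!idx 2 < xs!idx 0) = (p2 < p0)" using o'[of 2 0] by simp
  moreover have "(xs!idx 2 < xs!idx 1) = (p2 < p1)" using o'[of 2 1] by simp
  moreover have "(xs!idx 2 < xs!idx 3) = (p2 < p3)" using o'[of 2 3] by simp
  moreover have "(xs!idx 3 < xs!idx 0) = (p3 < p0)" using o'[of 3 0] by simp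
  moreover have "(xs!idx 3 < xs!idx 1) = (p3 < p1)" using o'[of 3 1] by simp
  moreover have "(xs!idx 3 < xs!idx 2) = (p3 < p2)" using o'[of 3 2] by simp
  ultimately show ?thesis
    by - (rule exI[of _ "idx 0"], rule exI[of _ "idx 1"], rule exI[of _ "idx 2"], rule exI[of _ "idx 3"], intro conjI; assumption)
qed

lemma contains4:
  "contains xs [p0,p1,p2,p3] \<longleftrightarrow> (\<exists>a b c d. a<b \<and> b<c \<and> c<d \<and> d < length xs \<and> (xs!a < xs!b \<longleftrightarrow> p0 < p1) \<and> (xs!a < xs!c \<longleftrightarrow> p0 < p2) \<and> (xs!a < xs!d \<longleftrightarrow> p0 < p3) \<and> (xs!b < xs!a \<longleftrightarrow> p1 < p0) \<and> (xs!b < xs!c \<longleftrightarrow> p1 < p2) \<and> (xs!b < xs!d \<longleftrightarrow> p1 < p3) \<and> (xs!c < xs!a \<longleftrightarrow> p2 < p0) \<and> (xs!c < xs!b \<longleftrightarrow> p2 < p1) \<and> (xs!c < xs!d \<longleftrightarrow> p2 < p3) \<and> (xs!d < xs!a \<longleftrightarrow> p3 < p0) \<and> (xs!d < xs!b \<longleftrightarrow> p3 < p1) \<and> (xs!d < xs!c \<longleftrightarrow> p3 < p2))"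
proof
  assume "contains xs [p0,p1,p2,p3]"
  then show "\<exists>a b c d. a<b \<and> b<c \<and> c<d \<and> d < length xs \<and> (xs!a < xs!b \<longleftrightarrow> p0 < p1) \<and> (xs!a < xs!c \<longleftrightarrow> p0 < p2) \<and> (xs!a < xs!d \<longleftrightarrow> p0 < p3) \<and> (xs!b < xs!a \<longleftrightarrow> p1 < p0) \<and> (xs!b < xs!c \<longleftrightarrow> p1 < p2) \<and> (xs!b < xs!d \<longleftrightarrow> p1 < p3) \<and> (xs!c < xs!a \<longleftrightarrow> p2 < p0) \<and> (xs!c < xs!b \<longleftrightarrow> p2 < p1) \<and> (xs!c < xs!d \<longleftrightarrow> p2 < p3) \<and> (xs!d < xs!a \<longleftrightarrow> p3 < p0) \<and> (xs!d < xs!b \<longleftrightarrow> p3 < p1) \<and> (xs!d < xs!c \<longleftrightarrow> p3 < p2)" by (rule contains4_fwd)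
next
  assume "\<exists>a b c d. a<b \<and> b<c \<and> c<d \<and> d < length xs \<and> (xs!a < xs!b \<longleftrightarrow> p0 < p1) \<and> (xs!a < xs!c \<longleftrightarrow> p0 < p2) \<and> (xs!a < xs!d \<longleftrightarrow> p0 < p3) \<and> (xs!b < xs!a \<longleftrightarrow> p1 < p0) \<and> (xs!b < xs!c \<longleftrightarrow> p1 < p2) \<and> (xs!b < xs!d \<longleftrightarrow> p1 < p3) \<and> (xs!c < xs!a \<longleftrightarrow> p2 < p0) \<and> (xs!c < xs!b \<longleftrightarrow> p2 < p1) \<and> (xs!c < xs!d \<longleftrightarrow> p2 < p3) \<and> (xs!d < xs!a \<longleftrightarrow> p3 < p0) \<and> (xs!d < xs!b \<longleftrightarrow> p3 < p1) \<and> (xs!d < xs!c \<longleftrightarrow> p3 < p2)"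
  then show "contains xs [p0,p1,p2,p3]"
    by (elim exE conjE) (rule contains4_back; assumption)
qed
lemma pt1: "((w < x \<longleftrightarrow> (2::nat) < 4) \<and> (w < y \<longleftrightarrow> (2::nat) < 1) \<and> (w < z \<longleftrightarrow> (2::nat) < 3) \<and> (x < w \<longleftrightarrow> (4::nat) < 2) \<and> (x < y \<longleftrightarrow> (4::nat) < 1) \<and> (x < z \<longleftrightarrow> (4::nat) < 3) \<and> (y < w \<longleftrightarrow> (1::nat) < 2) \<and> (y < x \<longleftrightarrow> (1::nat) < 4) \<and> (y < z \<longleftrightarrow> (1::nat) < 3) \<and> (z < w \<longleftrightarrow> (3::nat) < 2) \<and> (z < x \<longleftrightarrow> (3::nat) < 4) \<and> (z < y \<longleftrightarrow> (3::nat) < 1)) \<longleftrightarrow> (y<w \<and> w<z \<and> z<x)" for w x y z :: nat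
  by auto

lemma c1: "contains xs [2,4,1,3] \<longleftrightarrow> (\<exists>a b c d. a<b \<and> b<c \<and> c<d \<and> d < length xs \<and> xs!c<xs!a \<and> xs!a<xs!d \<and> xs!d<xs!b)"
  unfolding contains4 pt1 ..

lemma pt2: "((w < x \<longleftrightarrow> (2::nat) < 4) \<and> (w < y \<longleftrightarrow> (2::nat) < 3) \<and> (w < z \<longleftrightarrow> (2::nat) < 1) \<and> (x < w \<longleftrightarrow> (4::nat) < 2) \<and> (x < y \<longleftrightarrow> (4::nat) < 3) \<and> (x < z \<longleftrightarrow> (4::nat) < 1) \<and> (y < w \<longleftrightarrow> (3::nat) < 2) \<and> (y < x \<longleftrightarrow> (3::nat) < 4) \<and> (y < z \<longleftrightarrow> (3::nat) < 1) \<and> (z < w \<longleftrightarrow> (1::nat) < 2) \<and> (z < x \<longleftrightarrow> (1::nat) < 4) \<and> (z < y \<longleftrightarrow> (1::nat) < 3)) \<longleftrightarrow> (z<w \<and> w<y \<and> y<x)" for w x y z :: nat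
  by auto

lemma c2: "contains xs [2,4,3,1] \<longleftrightarrow> (\<exists>a b c d. a<b \<and> b<c \<and> c<d \<and> d < length xs \<and> xs!d<xs!a \<and> xs!a<xs!c \<and> xs!c<xs!b)"
  unfolding contains4 pt2 ..

lemma pt3: "((w < x \<longleftrightarrow> (4::nat) < 2) \<and> (w < y \<longleftrightarrow> (4::nat) < 1) \<and> (w < z \<longleftrightarrow> (4::nat) < 3) \<and> (x < w \<longleftrightarrow> (2::nat) < 4) \<and> (x < y \<longleftrightarrow> (2::nat) < 1) \<and> (x < z \<longleftrightarrow> (2::nat) < 3) \<and> (y < w \<longleftrightarrow> (1::nat) < 4) \<and> (y < x \<longleftrightarrow> (1::nat) < 2) \<and> (y < z \<longleftrightarrow> (1::nat) < 3) \<and> (z < w \<longleftrightarrow> (3::nat) < 4) \<and> (z < x \<longleftrightarrow> (3::nat) < 2) \<and> (z < y \<longleftrightarrow> (3::nat) < 1)) \<longleftrightarrow> (y<x \<and> x<z \<and> z<w)" for w x y z :: nat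
  by auto

lemma c3: "contains xs [4,2,1,3] \<longleftrightarrow> (\<exists>a b c d. a<b \<and> b<c \<and> c<d \<and> d < length xs \<and> xs!c<xs!b \<and> xs!b<xs!d \<and> xs!d<xs!a)"
  unfolding contains4 pt3 ..

lemma pt4: "((w < x \<longleftrightarrow> (4::nat) < 2) \<and> (w < y \<longleftrightarrow> (4::nat) < 3) \<and> (w < z \<longleftrightarrow> (4::nat) < 1) \<and> (x < w \<longleftrightarrow> (2::nat) < 4) \<and> (x < y \<longleftrightarrow> (2::nat) < 3) \<and> (x < z \<longleftrightarrow> (2::nat) < 1) \<and> (y < w \<longleftrightarrow> (3::nat) < 4) \<and> (y < x \<longleftrightarrow> (3::nat) < 2) \<and> (y < z \<longleftrightarrow> (3::nat) < 1) \<and> (z < w \<longleftrightarrow> (1::nat) < 4) \<and> (z < x \<longleftrightarrow> (1::nat) < 2) \<and> (z < y \<longleftrightarrow> (1::nat) < 3)) \<longleftrightarrow> (z<x \<and> x<y \<and> y<w)" for w x y z :: nat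
  by auto

lemma c4: "contains xs [4,2,3,1] \<longleftrightarrow> (\<exists>a b c d. a<b \<and> b<c \<and> c<d \<and> d < length xs \<and> xs!d<xs!b \<and> xs!b<xs!c \<and> xs!c<xs!a)"
  unfolding contains4 pt4 ..
definition Q :: "nat \<Rightarrow> nat \<Rightarrow> nat \<Rightarrow> nat \<Rightarrow> bool" where
  "Q w x y z \<longleftrightarrow> min y z < min w x \<and> min w x < max y z \<and> max y z < max w x"

definition bad :: "nat list \<Rightarrow> bool" where
  "bad xs \<longleftrightarrow> (\<exists>a b c d. a<b \<and> b<c \<and> c<d \<and> d < length xs \<and> Q (xs!a) (xs!b) (xs!c) (xs!d))"

lemma Q_iff: "Q w x y z \<longleftrightarrow> (y<w \<and> w<z \<and> z<x) \<or> (z<w \<and> w<y \<and> y<x) \<or> (y<x \<and> x<z \<and> z<w) \<or> (z<x \<and> x<y \<and> y<w)"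
  by (auto simp: Q_def min_def max_def)

lemma rect_iff: "rectangular xs \<longleftrightarrow> is_perm xs \<and> \<not> bad xs"
  unfolding rectangular_def avoids_def bad_def c1 c2 c3 c4 Q_iff
  by (simp only: conj_disj_distribL ex_disj_distrib de_Morgan_disj)

lemma bad_Cons: "bad (v#ys) \<longleftrightarrow> bad ys \<or> (\<exists>b c d. b<c \<and> c<d \<and> d<length ys \<and> Q v (ys!b) (ys!c) (ys!d))"
proof
  assume "bad (v#ys)"
  then obtain a b c d where h: "a<b" "b<c" "c<d" "d<length (v#ys)"
    "Q ((v#ys)!a) ((v#ys)!b) ((v#ys)!c) ((v#ys)!d)" unfolding bad_def by blast
  show "bad ys \<or> (\<exists>b c d. b<c \<and> c<d \<and> d<length ys \<and> Q v (ys!b) (ys!c) (ys!d))"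
  proof (cases "a=0")
    case True
    then have "Q v (ys!(b-1)) (ys!(c-1)) (ys!(d-1))" using h by (simp add: nth_Cons')
    moreover have "b-1 < c-1" "c-1<d-1" "d-1 < length ys" using h True by auto
    ultimately show ?thesis by blast
  next
    case False
    then have "Q (ys!(a-1)) (ys!(b-1)) (ys!(c-1)) (ys!(d-1))" using h by (simp add: nth_Cons')
    moreover have "a-1<b-1" "b-1 < c-1" "c-1<d-1" "d-1 < length ys" using h False by auto
    ultimately have "bad ys" unfolding bad_def by blast
    then show ?thesis ..
  qed
next
  assume "bad ys \<or> (\<exists>b c d. b<c \<and> c<d \<and> d<length ys \<and> Q v (ys!b) (ys!c) (ys!d))"
  then show "bad (v#ys)"
  proof
    assume "bad ys"
    then obtain a b c d where h: "a<b" "b<c" "c<d" "d<length ys"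
      "Q (ys!a) (ys!b) (ys!c) (ys!d)" unfolding bad_def by blast
    then have "Suc a < Suc b \<and> Suc b < Suc c \<and> Suc c < Suc d \<and> Suc d < length (v#ys) \<and>
       Q ((v#ys)!Suc a) ((v#ys)!Suc b) ((v#ys)!Suc c) ((v#ys)!Suc d)" by simp
    then show ?thesis unfolding bad_def by blast
  next
    assume "\<exists>b c d. b<c \<and> c<d \<and> d<length ys \<and> Q v (ys!b) (ys!c) (ys!d)"
    then obtain b c d where h: "b<c" "c<d" "d<length ys"
      "Q v (ys!b) (ys!c) (ys!d)" by blast
    then have "0 < Suc b \<and> Suc b < Suc c \<and> Suc c < Suc d \<and> Suc d < length (v#ys) \<and>
       Q ((v#ys)!0) ((v#ys)!Suc b) ((v#ys)!Suc c) ((v#ys)!Suc d)" by simp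
    then show ?thesis unfolding bad_def by blast
  qed
qed

lemma bad_map:
  assumes sm: "strict_mono f"
  shows "bad (map f xs) \<longleftrightarrow> bad xs"
proof -
  have QM: "Q (f w) (f x) (f y) (f z) \<longleftrightarrow> Q w x y z" for w x y z
    by (simp add: Q_iff strict_mono_less[OF sm])
  show ?thesis
  proof
    assume "bad (map f xs)"
    then obtain a b c d where h: "a<b" "b<c" "c<d" "d<length (map f xs)"
      "Q ((map f xs)!a) ((map f xs)!b) ((map f xs)!c) ((map f xs)!d)" unfolding bad_def by blast
    then have "Q (xs!a) (xs!b) (xs!c) (xs!d)" "d < length xs" by (simp_all add: QM)
    then show "bad xs" using h unfolding bad_def by blast
  next
    assume "bad xs"
    then obtain a b c d where h: "a<b" "b<c" "c<d" "d<length xs"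
      "Q (xs!a) (xs!b) (xs!c) (xs!d)" unfolding bad_def by blast
    then have "Q ((map f xs)!a) ((map f xs)!b) ((map f xs)!c) ((map f xs)!d)" "d < length (map f xs)" by (simp_all add: QM)
    then show "bad (map f xs)" using h unfolding bad_def by blast
  qed
qed

lemma bad_min:
  assumes "bad (v#ys)" "\<forall>z\<in>set ys. v < z"
  shows "bad ys"
proof -
  { fix b c d assume h: "b<c" "c<d" "d<length ys" "Q v (ys!b) (ys!c) (ys!d)"
    then have "v < ys!c" "v < ys!d" using assms(2) by auto
    with h(4) have False by (auto simp: Q_def min_def max_def split: if_splits) }
  then show ?thesis using assms(1) bad_Cons by blast
qed

lemma bad_second_min:
  assumes "bad (w # v # zs)" "\<forall>z\<in>set zs. v < z"
  shows "bad (w # zs)"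
proof -
  have "bad (v#zs) \<or> (\<exists>b c d. b<c \<and> c<d \<and> d<length (v#zs) \<and> Q w ((v#zs)!b) ((v#zs)!c) ((v#zs)!d))"
    using assms(1) bad_Cons by blast
  then show ?thesis
  proof
    assume "bad (v#zs)"
    then have "bad zs" using bad_min assms(2) by blast
    then show ?thesis using bad_Cons by blast
  next
    assume "\<exists>b c d. b<c \<and> c<d \<and> d<length (v#zs) \<and> Q w ((v#zs)!b) ((v#zs)!c) ((v#zs)!d)"
    then obtain b c d where h: "b<c" "c<d" "d<length (v#zs)" "Q w ((v#zs)!b) ((v#zs)!c) ((v#zs)!d)" by blast
    show ?thesis
    proof (cases "b = 0")
      case True
      then have "(v#zs)!c = zs!(c-1)" "(v#zs)!d = zs!(d-1)" "(v#zs)!b = v" using h by (simp_all add: nth_Cons')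
      moreover have "zs!(c-1) \<in> set zs" "zs!(d-1) \<in> set zs" using h True by auto
      ultimately have "v < (v#zs)!c" "v < (v#zs)!d" "(v#zs)!b = v" using assms(2) by auto
      with h(4) have False by (auto simp: Q_def min_def max_def split: if_splits)
      then show ?thesis ..
    next
      case False
      then have "Q w (zs!(b-1)) (zs!(c-1)) (zs!(d-1))" using h by (simp add: nth_Cons')
      moreover have "b-1 < c-1" "c-1<d-1" "d-1 < length zs" using h False by auto
      ultimately show ?thesis using bad_Cons by blast
    qed
  qed
qed

lemma Q_adj0: "v = w+1 \<or> w = v+1 \<Longrightarrow> \<not> Q v w y z"
  unfolding Q_def min_def max_def by (split if_split; split if_split; split if_split; split if_split; arith)

lemma adj_lt: "v = w+1 \<or> w = v+1 \<Longrightarrow> t \<noteq> v \<Longrightarrow> t \<noteq> w \<Longrightarrow> (t < v \<longleftrightarrow> t < w) \<and> (v < t \<longleftrightarrow> w < t)"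
  for t v w :: nat by arith

lemma bad_adj:
  assumes "bad (v # w # zs)" "distinct (v # w # zs)" "v = w+1 \<or> w = v+1"
  shows "bad (w # zs)"
proof -
  have "bad (w#zs) \<or> (\<exists>b c d. b<c \<and> c<d \<and> d<length (w#zs) \<and> Q v ((w#zs)!b) ((w#zs)!c) ((w#zs)!d))"
    using assms(1) bad_Cons by blast
  then show ?thesis
  proof
    assume "\<exists>b c d. b<c \<and> c<d \<and> d<length (w#zs) \<and> Q v ((w#zs)!b) ((w#zs)!c) ((w#zs)!d)"
    then obtain b c d where h: "b<c" "c<d" "d<length (w#zs)" "Q v ((w#zs)!b) ((w#zs)!c) ((w#zs)!d)" by blast
    show ?thesis
    proof (cases "b = 0")
      case True
      then have "(w#zs)!b = w" by simp
      with h(4) Q_adj0[OF assms(3)] have False by metis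
      then show ?thesis ..
    next
      case False
      then have q: "Q v (zs!(b-1)) (zs!(c-1)) (zs!(d-1))" using h by (simp add: nth_Cons')
      have i: "b-1 < c-1" "c-1<d-1" "d-1 < length zs" using h False by auto
      then have "zs!(b-1) \<in> set zs" "zs!(c-1) \<in> set zs" "zs!(d-1) \<in> set zs" by auto
      then have "zs!(b-1) \<noteq> v" "zs!(c-1) \<noteq> v" "zs!(d-1) \<noteq> v"
        "zs!(b-1) \<noteq> w" "zs!(c-1) \<noteq> w" "zs!(d-1) \<noteq> w" using assms(2) by auto
      then have "Q w (zs!(b-1)) (zs!(c-1)) (zs!(d-1))" using q adj_lt[OF assms(3)] unfolding Q_iff by simp
      then show ?thesis using i bad_Cons by blast
    qed
  qed
qed

definition sh :: "nat \<Rightarrow> nat \<Rightarrow> nat" where "sh i x = (if i \<le> x then x + 1 else x)"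

lemma sh_mono: "strict_mono (sh i)"
  by (auto simp: strict_mono_def sh_def)

lemma rho_eq: "rho i j xs = take (j-1) (map (sh i) xs) @ [i] @ drop (j-1) (map (sh i) xs)"
  by (simp add: rho_def sh_def[abs_def] Let_def)

lemma perm_rho:
  assumes "is_perm xs" "1 \<le> i" "i \<le> length xs + 1"
  shows "is_perm (rho i j xs)"
proof -
  define ys where "ys = map (sh i) xs"
  have dys: "distinct ys" using assms(1) strict_mono_imp_inj_on[OF sh_mono]
    unfolding ys_def is_perm_def by (simp add: distinct_map)
  have s1: "set ys = sh i ` {1..length xs}" using assms(1) by (simp add: ys_def is_perm_def)
  have sys: "set ys = {1..length xs + 1} - {i}"
  proof
    show "set ys \<subseteq> {1..length xs + 1} - {i}" unfolding s1 using assms by (auto simp: sh_def)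
  next
    show "{1..length xs + 1} - {i} \<subseteq> set ys" unfolding s1
    proof
      fix y assume y: "y \<in> {1..length xs + 1} - {i}"
      show "y \<in> sh i ` {1..length xs}"
      proof (cases "y < i")
        case True
        then have "sh i y = y" by (simp add: sh_def)
        moreover have "y \<in> {1..length xs}" using y True assms by auto
        ultimately show ?thesis by (metis imageI)
      next
        case False
        then have "sh i (y-1) = y" using y by (auto simp: sh_def)
        moreover have "y-1 \<in> {1..length xs}" using y False assms by auto
        ultimately show ?thesis by (metis imageI)
      qed
    qed
  qed
  have r: "rho i j xs = take (j-1) ys @ [i] @ drop (j-1) ys" by (simp add: rho_eq ys_def)
  have st: "set (take (j-1) ys) \<union> set (drop (j-1) ys) = set ys"
    by (metis append_take_drop_id set_append)
  have dd: "distinct (take (j-1) ys @ drop (j-1) ys)" using dys by simp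
  have ni: "i \<notin> set ys" using sys by auto
  have dj: "set (take (j-1) ys) \<inter> set (drop (j-1) ys) = {}"
    using set_take_disj_set_drop_if_distinct[OF dys] by blast
  have t1: "i \<notin> set (take (j-1) ys)" using ni in_set_takeD by metis
  have t2: "i \<notin> set (drop (j-1) ys)" using ni in_set_dropD by metis
  have t3: "distinct (take (j-1) ys)" "distinct (drop (j-1) ys)" using dys by simp_all
  have d: "distinct (rho i j xs)" unfolding r using t1 t2 t3 dj by (simp add: distinct_append)
  have "set (rho i j xs) = set (take (j-1) ys) \<union> insert i (set (drop (j-1) ys))" unfolding r by simp
  also have "\<dots> = insert i (set ys)" using st by blast
  also have "\<dots> = {1..length xs + 1}" unfolding sys by (rule insert_Diff) (use assms(2,3) in simp)
  finally have s: "set (rho i j xs) = {1..length xs + 1}" .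
  have "length (rho i j xs) = length xs + 1" unfolding r ys_def by simp
  then show ?thesis using d s unfolding is_perm_def by simp
qed

theorem lemma4p1:
  fixes \<pi> :: "nat list"
  assumes "rectangular \<pi>"
  shows "rectangular (psi1 \<pi>) \<and>
         (length \<pi> \<ge> 1 \<and> hd \<pi> \<noteq> 1 \<longrightarrow> rectangular (psi2 \<pi>)) \<and>
         (length \<pi> \<ge> 1 \<and> hd \<pi> \<noteq> 1 \<longrightarrow> rectangular (psiu \<pi>)) \<and>
         (length \<pi> \<ge> 1 \<longrightarrow> rectangular (psid \<pi>))"
proof -
  have P: "is_perm \<pi>" and NB: "\<not> bad \<pi>" using assms rect_iff by auto
  have S: "set \<pi> = {1..length \<pi>}" using P by (simp add: is_perm_def)
  have NBm: "\<not> bad (map (sh i) \<pi>)" for i using NB bad_map[OF sh_mono] by blast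
  have R1: "rectangular (psi1 \<pi>)"
  proof -
    have e: "psi1 \<pi> = 1 # map (sh 1) \<pi>" by (simp add: psi1_def rho_eq)
    have "is_perm (psi1 \<pi>)" unfolding psi1_def by (rule perm_rho[OF P]) auto
    moreover have "\<not> bad (psi1 \<pi>)"
    proof
      assume "bad (psi1 \<pi>)"
      moreover have "\<forall>z\<in>set (map (sh 1) \<pi>). 1 < z" using S by (auto simp: sh_def)
      ultimately have "bad (map (sh 1) \<pi>)" unfolding e using bad_min by blast
      with NBm show False by blast
    qed
    ultimately show ?thesis using rect_iff by blast
  qed
  have R2: "rectangular (psi2 \<pi>)" if L: "length \<pi> \<ge> 1"
  proof -
    obtain u us where pu: "\<pi> = u # us" using L by (cases \<pi>) auto
    have e: "psi2 \<pi> = sh 1 u # 1 # map (sh 1) us" by (simp add: psi2_def rho_eq pu)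
    have "is_perm (psi2 \<pi>)" unfolding psi2_def by (rule perm_rho[OF P]) auto
    moreover have "\<not> bad (psi2 \<pi>)"
    proof
      assume "bad (psi2 \<pi>)"
      moreover have "\<forall>z\<in>set (map (sh 1) us). 1 < z" using S pu by (auto simp: sh_def)
      ultimately have "bad (sh 1 u # map (sh 1) us)" unfolding e using bad_second_min by blast
      with NBm[of 1] show False by (simp add: pu)
    qed
    ultimately show ?thesis using rect_iff by blast
  qed
  have R3: "rectangular (psiu \<pi>)" if L: "length \<pi> \<ge> 1"
  proof -
    obtain u us where pu: "\<pi> = u # us" using L by (cases \<pi>) auto
    have u: "1 \<le> u" "u \<le> length \<pi>" using S pu by auto
    have e: "psiu \<pi> = u # (u+1) # map (sh u) us" by (simp add: psiu_def rho_eq pu sh_def)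
    have "psiu \<pi> = rho u 1 \<pi>" by (simp add: psiu_def pu)
    then have pp: "is_perm (psiu \<pi>)" using perm_rho[OF P, of u 1] u by simp
    moreover have "\<not> bad (psiu \<pi>)"
    proof
      assume "bad (psiu \<pi>)"
      moreover have "distinct (psiu \<pi>)" using pp by (simp add: is_perm_def)
      ultimately have "bad ((u+1) # map (sh u) us)" unfolding e using bad_adj by blast
      moreover have "(u+1) # map (sh u) us = map (sh u) \<pi>" by (simp add: pu sh_def)
      ultimately show False using NBm by metis
    qed
    ultimately show ?thesis using rect_iff by blast
  qed
  have R4: "rectangular (psid \<pi>)" if L: "length \<pi> \<ge> 1"
  proof -
    obtain u us where pu: "\<pi> = u # us" using L by (cases \<pi>) auto
    have u: "1 \<le> u" "u \<le> length \<pi>" using S pu by auto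
    have e: "psid \<pi> = (u+1) # u # map (sh (u+1)) us" by (simp add: psid_def rho_eq pu sh_def)
    have "psid \<pi> = rho (u+1) 1 \<pi>" by (simp add: psid_def pu)
    then have pp: "is_perm (psid \<pi>)" using perm_rho[OF P, of "u+1" 1] u by simp
    moreover have "\<not> bad (psid \<pi>)"
    proof
      assume "bad (psid \<pi>)"
      moreover have "distinct (psid \<pi>)" using pp by (simp add: is_perm_def)
      ultimately have "bad (u # map (sh (u+1)) us)" unfolding e using bad_adj by blast
      moreover have "u # map (sh (u+1)) us = map (sh (u+1)) \<pi>" by (simp add: pu sh_def)
      ultimately show False using NBm by metis
    qed
    ultimately show ?thesis using rect_iff by blast
  qed
  show ?thesis using R1 R2 R3 R4 by blast
qed

end
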